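(* Let $\hat{\mathbf Q}=\tilde{\mathbf Q}_{st}+\tilde{\mathbf Q}_{\mathcal I}\varepsilon$ be an $n\times n$ dual quaternion Hermitian matrix with $\tilde{\mathbf Q}_{st}=(\tilde q_{1,ij})$ and $\tilde{\mathbf Q}_{\mathcal I}=(\tilde q_{2,ij})$. Suppose $\tilde q_{1,ij}=0$ and $\tilde q_{1,ii}\neq\tilde q_{1,jj}$ for all $i\neq j$. Then for each $i=1,\dots,n$, $\tilde q_{1,ii}+\tilde q_{2,ii}\varepsilon$ is an eigenvalue of $\hat{\mathbf Q}$ with corresponding eigenvector $\hat{\mathbf v}_i$ whose $i$-th component is $1$ and whose $j$-th component, for $j\neq i$, is $\dfrac{\tilde q_{2,ji}}{\tilde q_{1,ii}-\tilde q_{1,jj}}\varepsilon$.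
   Context: Quaternions $q=q_0+q_1\mathbf i+q_2\mathbf j+q_3\mathbf k$ with conjugate $q^\ast$; dual quaternions $q_{st}+q_{\mathcal I}\varepsilon$ with $\varepsilon$ commuting with quaternions, $\varepsilon\ne0$, $\varepsilon^2=0$, multiplied by $(p_{st}+p_{\mathcal I}\varepsilon)(q_{st}+q_{\mathcal I}\varepsilon)=p_{st}q_{st}+(p_{st}q_{\mathcal I}+p_{\mathcal I}q_{st})\varepsilon$. A dual quaternion matrix is Hermitian if it equals its conjugate transpose (so its diagonal entries are dual numbers, i.e. have real standard and dual parts). A dual quaternion vector $\hat{\mathbf x}$ is appreciable if its standard part is nonzero. A dual number $\hat\lambda$ is an eigenvalue of $\hat{\mathbf Q}$ with eigenvector $\hat{\mathbf x}$ if $\hat{\mathbf x}$ is appreciable and $\hat{\mathbf Q}\hat{\mathbf x}=\hat{\mathbf x}\hat\lambda$. *)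

theory Defs
  imports Main "HOL-Library.Complex_Order" Complex_Main
begin

datatype quat = Quat (q0: real) (q1: real) (q2: real) (q3: real)

instantiation quat :: ab_group_add
begin
definition "0 = Quat 0 0 0 0"
definition "p + q = Quat (q0 p + q0 q) (q1 p + q1 q) (q2 p + q2 q) (q3 p + q3 q)"
definition "- q = Quat (- q0 q) (- q1 q) (- q2 q) (- q3 q)"
definition "p - q = Quat (q0 p - q0 q) (q1 p - q1 q) (q2 p - q2 q) (q3 p - q3 q)"
instance
  by standard (auto simp: zero_quat_def plus_quat_def uminus_quat_def minus_quat_def)
end

definition qmult :: "quat \<Rightarrow> quat \<Rightarrow> quat" (infixl "\<otimes>q" 70) where
  "p \<otimes>q q = Quat
     (q0 p * q0 q - q1 p * q1 q - q2 p * q2 q - q3 p * q3 q)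
     (q0 p * q1 q + q1 p * q0 q + q2 p * q3 q - q3 p * q2 q)
     (q0 p * q2 q - q1 p * q3 q + q2 p * q0 q + q3 p * q1 q)
     (q0 p * q3 q + q1 p * q2 q - q2 p * q1 q + q3 p * q0 q)"

definition qcnj :: "quat \<Rightarrow> quat" where
  "qcnj q = Quat (q0 q) (- q1 q) (- q2 q) (- q3 q)"

definition qreal :: "real \<Rightarrow> quat" where
  "qreal r = Quat r 0 0 0"

datatype dquat = DQ (st: quat) (du: quat)

instantiation dquat :: ab_group_add
begin
definition "0 = DQ 0 0"
definition "p + q = DQ (st p + st q) (du p + du q)"
definition "- q = DQ (- st q) (- du q)"
definition "p - q = DQ (st p - st q) (du p - du q)"
instance
  by standard (auto simp: zero_dquat_def plus_dquat_def uminus_dquat_def minus_dquat_def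
      dquat.expand)
end

definition dqmult :: "dquat \<Rightarrow> dquat \<Rightarrow> dquat" (infixl "\<otimes>d" 70) where
  "p \<otimes>d q = DQ (st p \<otimes>q st q) (st p \<otimes>q du q + du p \<otimes>q st q)"

definition dqcnj :: "dquat \<Rightarrow> dquat" where
  "dqcnj q = DQ (qcnj (st q)) (qcnj (du q))"

definition dual_num :: "real \<Rightarrow> real \<Rightarrow> dquat" where
  "dual_num a b = DQ (qreal a) (qreal b)"

definition is_dual_number :: "dquat \<Rightarrow> bool" where
  "is_dual_number x \<longleftrightarrow> (\<exists>a b. x = dual_num a b)"

section \<open>n x n dual quaternion matrices (indices 0..n-1) and vectors\<close>

definition dq_hermitian :: "nat \<Rightarrow> (nat \<Rightarrow> nat \<Rightarrow> dquat) \<Rightarrow> bool" where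
  "dq_hermitian n Q \<longleftrightarrow> (\<forall>i<n. \<forall>j<n. Q i j = dqcnj (Q j i))"

definition dq_mat_vec :: "nat \<Rightarrow> (nat \<Rightarrow> nat \<Rightarrow> dquat) \<Rightarrow> (nat \<Rightarrow> dquat) \<Rightarrow> nat \<Rightarrow> dquat" where
  "dq_mat_vec n Q x = (\<lambda>i. \<Sum>j<n. Q i j \<otimes>d x j)"

definition appreciable :: "nat \<Rightarrow> (nat \<Rightarrow> dquat) \<Rightarrow> bool" where
  "appreciable n x \<longleftrightarrow> (\<exists>i<n. st (x i) \<noteq> 0)"

definition dq_eigenpair :: "nat \<Rightarrow> (nat \<Rightarrow> nat \<Rightarrow> dquat) \<Rightarrow> dquat \<Rightarrow> (nat \<Rightarrow> dquat) \<Rightarrow> bool" where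
  "dq_eigenpair n Q lam x \<longleftrightarrow> is_dual_number lam \<and> appreciable n x \<and>
     (\<forall>i<n. dq_mat_vec n Q x i = x i \<otimes>d lam)"

end

theory Submission
  imports Defs
begin

lemma qmult_0l[simp]: "0 \<otimes>q p = 0" and qmult_0r[simp]: "p \<otimes>q 0 = 0"
  by (auto simp: qmult_def zero_quat_def)

lemma qreal_mult_comm: "qreal a \<otimes>q p = p \<otimes>q qreal a"
  by (auto simp: qmult_def qreal_def)

lemma qreal_mult_assoc: "qreal a \<otimes>q (qreal b \<otimes>q p) = qreal (a*b) \<otimes>q p"
  by (auto simp: qmult_def qreal_def algebra_simps)

lemma qreal1_l[simp]: "qreal 1 \<otimes>q p = p" and qreal1_r[simp]: "p \<otimes>q qreal 1 = p"
  by (auto simp: qmult_def qreal_def intro: quat.expand)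

lemma qreal_add_distrib: "qreal a \<otimes>q p + p = qreal (a + 1) \<otimes>q p"
  by (auto simp: qmult_def qreal_def plus_quat_def algebra_simps)

lemma qreal_ne0: "qreal 1 \<noteq> 0" by (simp add: qreal_def zero_quat_def)

lemma real_of_cnj: "q = qcnj q \<Longrightarrow> q = qreal (q0 q)"
  by (cases q) (auto simp: qcnj_def qreal_def)

lemma q0_qreal[simp]: "q0 (qreal x) = x" by (simp add: qreal_def)

lemma key: "ai \<noteq> ak \<Longrightarrow> p + qreal ak \<otimes>q (qreal (1 / (ai - ak)) \<otimes>q p) = qreal (1 / (ai - ak)) \<otimes>q p \<otimes>q qreal ai"
proof -
  assume h: "ai \<noteq> ak"
  then have h': "ai - ak \<noteq> 0" by simp
  show ?thesis
    by (cases p) (simp add: qmult_def qreal_def plus_quat_def divide_simps h h' algebra_simps)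
qed

lemma dq_zero_st: "st p = 0 \<Longrightarrow> st q = 0 \<Longrightarrow> p \<otimes>d q = 0"
  by (simp add: dqmult_def zero_dquat_def)

lemma dual_cnj: "x = dqcnj x \<Longrightarrow> x = dual_num (q0 (st x)) (q0 (du x))"
  by (cases x) (auto simp: dqcnj_def dual_num_def intro: real_of_cnj)

theorem lemma3p7:
  fixes n :: nat and Q :: "nat \<Rightarrow> nat \<Rightarrow> dquat"
  assumes herm: "dq_hermitian n Q"
    and offdiag: "\<forall>i<n. \<forall>j<n. i \<noteq> j \<longrightarrow> st (Q i j) = 0"
    and distinct: "\<forall>i<n. \<forall>j<n. i \<noteq> j \<longrightarrow> st (Q i i) \<noteq> st (Q j j)"
  shows "\<forall>i<n. dq_eigenpair n Q (Q i i)
           (\<lambda>j. if j = i then DQ (qreal 1) 0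
                else DQ 0 (qreal (1 / (q0 (st (Q i i)) - q0 (st (Q j j)))) \<otimes>q du (Q j i)))"
proof (intro allI impI)
  fix i assume i: "i < n"
  define a where "a k = q0 (st (Q k k))" for k
  define b where "b k = q0 (du (Q k k))" for k
  have diag: "Q k k = dual_num (a k) (b k)" if "k < n" for k
    using herm that dual_cnj unfolding dq_hermitian_def a_def b_def by blast
  have aneq: "a k \<noteq> a i" if "k < n" "k \<noteq> i" for k
  proof
    assume "a k = a i"
    then have "st (Q k k) = st (Q i i)"
      using diag[OF that(1)] diag[OF i] by (simp add: dual_num_def)
    then show False using distinct that i by blast
  qed
  define x where "x = (\<lambda>j. if j = i then DQ (qreal 1) 0
                else DQ 0 (qreal (1 / (q0 (st (Q i i)) - q0 (st (Q j j)))) \<otimes>q du (Q j i)))"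
  have row: "dq_mat_vec n Q x k = x k \<otimes>d Q i i" if k: "k < n" for k
  proof (cases "k = i")
    case True
    have "dq_mat_vec n Q x k = (\<Sum>j\<in>{i}. Q k j \<otimes>d x j)"
      unfolding dq_mat_vec_def
      by (rule sum.mono_neutral_right) (use i True offdiag in \<open>auto simp: x_def intro!: dq_zero_st\<close>)
    also have "\<dots> = x k \<otimes>d Q i i"
      using True by (simp add: x_def dqmult_def)
    finally show ?thesis .
  next
    case False
    have "dq_mat_vec n Q x k = (\<Sum>j\<in>{i,k}. Q k j \<otimes>d x j)"
      unfolding dq_mat_vec_def
      by (rule sum.mono_neutral_right) (use i k False offdiag in \<open>auto simp: x_def intro!: dq_zero_st\<close>)
    also have "\<dots> = Q k i \<otimes>d x i + Q k k \<otimes>d x k" using False by simp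
    also have "\<dots> = x k \<otimes>d Q i i"
    proof -
      have c: "1 / (a i - a k) * a k + 1 = a i * (1 / (a i - a k))"
        using aneq[OF k False] by (simp add: field_simps)
      show ?thesis
        using False offdiag i k
        apply (simp add: x_def dqmult_def diag[OF i] diag[OF k] dual_num_def flip: a_def)
        using aneq[OF k False] by (simp add: key plus_dquat_def)
    qed
    finally show ?thesis .
  qed
  show "dq_eigenpair n Q (Q i i) x"
    unfolding dq_eigenpair_def is_dual_number_def appreciable_def
    using row diag[OF i] i by (auto simp: x_def qreal_ne0)
qed

end
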